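(* (a) For every positive function $\varphi(t)$ and every function $Q(r)$, the metric $$ds^2=-\varphi^3(t)dt^2+\varphi(t)\big([t\,Q(r)+1]^2dr^2+dx^2+dy^2\big)$$ is a plane-symmetric perfect fluid solution with $u=\varphi^{-3/2}\partial_t$, pressure $p=\varphi^{-3}\left[\frac74\frac{\dot\varphi^2}{\varphi^2}-\frac{\ddot\varphi}{\varphi}\right]$ and energy density $\rho=\varphi^{-3}\left[\frac34\frac{\dot\varphi^2}{\varphi^2}+\frac{\dot\varphi Q}{\varphi(tQ+1)}\right]$. (b) Conversely, every solution $(\varphi(t),\alpha(t,r),v(t))$, $v,\varphi>0$, of $2v\varphi\ddot\alpha+(\dot v\varphi+3v\dot\varphi)\dot\alpha=0$ with $\alpha=\alpha_1(t)+\alpha_2(t)Q(r)$, $\alpha_2$ non-constant, defines (via $ds^2=-v^{-1}dt^2+\varphi[\alpha^2dr^2+dx^2+dy^2]$) a metric which, after a change of the time coordinate, constant rescalings of $\varphi$ and of the spatial coordinates, and a redefinition of $r$ and $Q$, takes the form in (a).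
   Context: Dot denotes $d/dt$. The equation in (b) is the perfect fluid field equation for the $k=0$ T-models written in the variables $(\varphi,\alpha,v)$. *)

theory Defs
  imports "HOL-Analysis.Analysis"
begin

text \<open>Spacetime points are vectors in real^4; coordinate indices (type 4):
  0 = t, 1 = r, 2 = x, 3 = y.  Signature (-,+,+,+), units with 8 pi G = 1
  (Einstein equations G_ij = T_ij).\<close>

type_synonym pt = "real^4"
type_synonym metric = "4 \<Rightarrow> 4 \<Rightarrow> pt \<Rightarrow> real"

definition mkpt :: "real \<Rightarrow> real \<Rightarrow> real \<Rightarrow> real \<Rightarrow> pt" where
  "mkpt t r x y = (\<chi> j. if j = 0 then t else if j = 1 then r else if j = 2 then x else y)"

definition tco :: "pt \<Rightarrow> real" where "tco p = p $ 0"
definition rco :: "pt \<Rightarrow> real" where "rco p = p $ 1"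

definition pd :: "4 \<Rightarrow> (pt \<Rightarrow> real) \<Rightarrow> pt \<Rightarrow> real" where
  "pd i f p = deriv (\<lambda>s. f (\<chi> j. if j = i then s else p $ j)) (p $ i)"

definition gmat :: "metric \<Rightarrow> pt \<Rightarrow> real^4^4" where
  "gmat g p = (\<chi> i j. g i j p)"

definition ginv :: "metric \<Rightarrow> 4 \<Rightarrow> 4 \<Rightarrow> pt \<Rightarrow> real" where
  "ginv g i j p = matrix_inv (gmat g p) $ i $ j"

definition christoffel :: "metric \<Rightarrow> 4 \<Rightarrow> 4 \<Rightarrow> 4 \<Rightarrow> pt \<Rightarrow> real" where
  "christoffel g k i j p =
     (1/2) * (\<Sum>l\<in>UNIV. ginv g k l p *
        (pd i (g l j) p + pd j (g l i) p - pd l (g i j) p))"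

definition ricci :: "metric \<Rightarrow> 4 \<Rightarrow> 4 \<Rightarrow> pt \<Rightarrow> real" where
  "ricci g i j p =
     (\<Sum>k\<in>UNIV. pd k (christoffel g k i j) p - pd j (christoffel g k i k) p
        + (\<Sum>l\<in>UNIV. christoffel g k k l p * christoffel g l i j p
                     - christoffel g k j l p * christoffel g l i k p))"

definition scalar_curv :: "metric \<Rightarrow> pt \<Rightarrow> real" where
  "scalar_curv g p = (\<Sum>i\<in>UNIV. \<Sum>j\<in>UNIV. ginv g i j p * ricci g i j p)"

definition einstein :: "metric \<Rightarrow> 4 \<Rightarrow> 4 \<Rightarrow> pt \<Rightarrow> real" where
  "einstein g i j p = ricci g i j p - (1/2) * g i j p * scalar_curv g p"

definition perfect_fluid_solution ::
  "metric \<Rightarrow> pt set \<Rightarrow> (4 \<Rightarrow> pt \<Rightarrow> real) \<Rightarrow> (pt \<Rightarrow> real) \<Rightarrow> (pt \<Rightarrow> real) \<Rightarrow> bool" where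
  "perfect_fluid_solution g U u rho pr \<longleftrightarrow> open U \<and>
     (\<forall>q\<in>U.
        (\<forall>i j. g i j q = g j i q) \<and> det (gmat g q) \<noteq> 0 \<and>
        (\<Sum>i\<in>UNIV. \<Sum>j\<in>UNIV. g i j q * u i q * u j q) = -1 \<and>
        (\<forall>i j. einstein g i j q =
            (rho q + pr q) * (\<Sum>k\<in>UNIV. g i k q * u k q) * (\<Sum>k\<in>UNIV. g j k q * u k q)
            + pr q * g i j q))"

text \<open>Plane symmetry in adapted coordinates (t,r,x,y):
  ds^2 = g_ab(t,r) dx^a dx^b + C(t,r)(dx^2 + dy^2), a,b in {t,r}, on a domain
  invariant under translations in x and y.\<close>
definition plane_symmetric :: "metric \<Rightarrow> pt set \<Rightarrow> bool" where
  "plane_symmetric g U \<longleftrightarrow>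
     (\<forall>q\<in>U. \<forall>a b. (\<chi> j. if j = 2 then a else if j = 3 then b else q $ j) \<in> U) \<and>
     (\<forall>q\<in>U. \<forall>q'\<in>U. q $ 0 = q' $ 0 \<and> q $ 1 = q' $ 1 \<longrightarrow> (\<forall>i j. g i j q = g i j q')) \<and>
     (\<forall>q\<in>U. g 2 2 q = g 3 3 q \<and> g 2 3 q = 0 \<and> g 3 2 q = 0 \<and>
        (\<forall>a\<in>{0,1}. \<forall>b\<in>{2,3}. g a b q = 0 \<and> g b a q = 0))"

definition metricA :: "(real \<Rightarrow> real) \<Rightarrow> (real \<Rightarrow> real) \<Rightarrow> metric" where
  "metricA phi Q i j p =
     (if i \<noteq> j then 0
      else if i = 0 then - ((phi (tco p)) ^ 3)
      else if i = 1 then phi (tco p) * (tco p * Q (rco p) + 1) ^ 2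
      else phi (tco p))"

end

theory Submission
  imports Defs
begin

lemma four_eq: "(4::4) = 0" by simp

lemma neq4: "(0::4) \<noteq> 1" "(0::4) \<noteq> 2" "(0::4) \<noteq> 3" "(1::4) \<noteq> 2" "(1::4) \<noteq> 3" "(2::4) \<noteq> 3"
  by simp_all

lemma sum4: "sum (f::4\<Rightarrow>real) UNIV = f 0 + f 1 + f 2 + f 3"
proof -
  have u: "(UNIV::4 set) = {0,1,2,3}" using exhaust_4 four_eq by auto
  show ?thesis unfolding u by (simp add: neq4)
qed


lemma all4: "(\<forall>i::4. P i) \<longleftrightarrow> P 0 \<and> P 1 \<and> P 2 \<and> P 3"
  by (metis exhaust_4 four_eq)



definition HasP :: "4 \<Rightarrow> (real\<Rightarrow>real\<Rightarrow>real) \<Rightarrow> real \<Rightarrow> real \<Rightarrow> real \<Rightarrow> bool" where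
 "HasP a G D t r \<longleftrightarrow> (a = 0 \<longrightarrow> ((\<lambda>s. G s r) has_real_derivative D) (at t)) \<and>
    (a = 1 \<longrightarrow> ((\<lambda>s. G t s) has_real_derivative D) (at r)) \<and> (a \<noteq> 0 \<and> a \<noteq> 1 \<longrightarrow> D = 0)"

lemma continuous_line: "continuous (at x) (\<lambda>s::real. (\<chi> j. if j = a then s else q $ j) :: real^4)"
proof -
  have "continuous_on UNIV (\<lambda>s::real. (\<chi> j. if j = a then s else q $ j) :: real^4)"
  proof (rule continuous_on_vec_lambda)
    fix i :: 4
    show "continuous_on UNIV (\<lambda>s::real. if i = a then s else q $ i)"
      by (cases "i = a") (simp_all add: continuous_on_id continuous_on_const)
  qed
  then show ?thesis using continuous_on_eq_continuous_at by blast
qed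

lemma pd_local:
  assumes U: "open U" "q \<in> U" and FG: "\<forall>p\<in>U. F p = G (p$0) (p$1)" and H: "HasP a G D (q$0) (q$1)"
  shows "pd a F q = D"
proof -
  let ?l = "\<lambda>s::real. (\<chi> j. if j = a then s else q $ j) :: real^4"
  have lq: "?l (q$a) = q" by (simp add: vec_eq_iff)
  have "open (?l -` U)" by (rule continuous_open_vimage[OF U(1) continuous_line])
  moreover have "q $ a \<in> ?l -` U" using U(2) lq by simp
  ultimately have ev: "eventually (\<lambda>s. ?l s \<in> U) (nhds (q$a))" using eventually_nhds_in_open by fastforce
  have ev2: "eventually (\<lambda>s. F (?l s) = G ((?l s)$0) ((?l s)$1)) (nhds (q$a))"
    using ev by eventually_elim (use FG in auto)
  have "pd a F q = deriv (\<lambda>s. G ((?l s)$0) ((?l s)$1)) (q$a)"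
    unfolding pd_def by (rule deriv_cong_ev[OF ev2 refl])
  also have "\<dots> = D"
  proof -
    consider "a = 0" | "a = 1" | "a \<noteq> 0 \<and> a \<noteq> 1" by blast
    then show ?thesis
    proof cases
      case 1
      have e: "(\<lambda>s. G ((?l s)$0) ((?l s)$1)) = (\<lambda>s. G s (q$1))" using 1 by (simp add: neq4)
      have "((\<lambda>s. G s (q$1)) has_real_derivative D) (at (q$0))" using H 1 unfolding HasP_def by simp
      then show ?thesis unfolding e using 1 by (simp add: DERIV_imp_deriv)
    next
      case 2
      have e: "(\<lambda>s. G ((?l s)$0) ((?l s)$1)) = (\<lambda>s. G (q$0) s)" using 2 by (simp add: neq4)
      have "((\<lambda>s. G (q$0) s) has_real_derivative D) (at (q$1))" using H 2 unfolding HasP_def by simp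
      then show ?thesis unfolding e using 2 by (simp add: DERIV_imp_deriv)
    next
      case 3
      have e: "(\<lambda>s. G ((?l s)$0) ((?l s)$1)) = (\<lambda>s. G (q$0) (q$1))" using 3 by (simp add: neq4)
      have "D = 0" using H 3 unfolding HasP_def by simp
      then show ?thesis unfolding e by simp
    qed
  qed
  finally show ?thesis .
qed


lemma HasP_add: "HasP a F D t r \<Longrightarrow> HasP a G E t r \<Longrightarrow> HasP a (\<lambda>x y. F x y + G x y) (D + E) t r"
  unfolding HasP_def by (auto intro: derivative_intros)
lemma HasP_diff: "HasP a F D t r \<Longrightarrow> HasP a G E t r \<Longrightarrow> HasP a (\<lambda>x y. F x y - G x y) (D - E) t r"
  unfolding HasP_def by (auto intro: derivative_intros)
lemma HasP_cmult: "HasP a F D t r \<Longrightarrow> HasP a (\<lambda>x y. c * F x y) (c * D) t r"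
  unfolding HasP_def by (auto intro: DERIV_cmult)
lemma HasP_if: "(P \<Longrightarrow> HasP a F D t r) \<Longrightarrow> HasP a (\<lambda>x y. if P then F x y else 0) (if P then D else 0) t r"
  unfolding HasP_def by (cases P) auto
lemma HasP_divide: "HasP a F D t r \<Longrightarrow> HasP a G E t r \<Longrightarrow> G t r \<noteq> 0 \<Longrightarrow>
   HasP a (\<lambda>x y. F x y / G x y) ((D * G t r - F t r * E) / (G t r)^2) t r"
  unfolding HasP_def power2_eq_square by (auto intro: DERIV_divide)

lemma matrix_inv_diag:
  fixes A :: "real^4^4"
  assumes A: "\<And>i j. A$i$j = (if i = j then d i else 0)" and d: "\<And>i. d i \<noteq> 0"
  shows "matrix_inv A = (\<chi> i j. if i = j then 1 / d i else 0)"
proof -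
  let ?B = "(\<chi> i j. if i = j then 1 / d i else 0) :: real^4^4"
  have s: "(\<Sum>k\<in>UNIV. (if i = k then a else 0) * (if k = j then b k else 0)) = (if i = j then a * b i else (0::real))" for i j :: 4 and a :: real and b
  proof -
    have "(\<Sum>k\<in>UNIV. (if i = k then a else 0) * (if k = j then b k else 0)) = (\<Sum>k\<in>UNIV. if k = i then (if k = j then a * b k else 0) else 0)"
      by (rule sum.cong) auto
    also have "\<dots> = (if i = j then a * b i else 0)" by simp
    finally show ?thesis .
  qed
  have AB1: "(A ** ?B) $ i $ j = mat 1 $ i $ j" for i j
    using d[of i] d[of j] by (simp add: matrix_matrix_mult_def mat_def A s)
  have BA1: "(?B ** A) $ i $ j = mat 1 $ i $ j" for i j
    using d[of i] d[of j] by (simp add: matrix_matrix_mult_def mat_def A s)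
  have AB: "A ** ?B = mat 1" using AB1 by (simp add: vec_eq_iff)
  have BA: "?B ** A = mat 1" using BA1 by (simp add: vec_eq_iff)
  have ex: "\<exists>A'. A ** A' = mat 1 \<and> A' ** A = mat 1" using AB BA by blast
  have sm: "A ** (SOME A'. A ** A' = mat 1 \<and> A' ** A = mat 1) = mat 1 \<and> (SOME A'. A ** A' = mat 1 \<and> A' ** A = mat 1) ** A = mat 1"
    by (rule someI_ex[OF ex])
  define C where "C = (SOME A'. A ** A' = mat 1 \<and> A' ** A = mat 1)"
  have "C = C ** (A ** ?B)" using AB by (simp add: matrix_mul_rid)
  also have "\<dots> = (C ** A) ** ?B" by (simp add: matrix_mul_assoc)
  also have "\<dots> = ?B" using sm unfolding C_def[symmetric] by (simp add: matrix_mul_lid)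
  finally have "(SOME A'. A ** A' = mat 1 \<and> A' ** A = mat 1) = ?B" unfolding C_def .
  then show ?thesis unfolding matrix_inv_def .
qed

locale partA =
  fixes I J :: "real set" and phi phi' phi'' Q Q' Q'' :: "real \<Rightarrow> real"
  assumes oI: "open I" and oJ: "open J"
    and dphi: "\<forall>t\<in>I. 0 < phi t \<and> (phi has_real_derivative phi' t) (at t) \<and> (phi' has_real_derivative phi'' t) (at t)"
    and dQ: "\<forall>r\<in>J. (Q has_real_derivative Q' r) (at r) \<and> (Q' has_real_derivative Q'' r) (at r)"
begin

definition gd :: "4 \<Rightarrow> real \<Rightarrow> real \<Rightarrow> real" where
  "gd k t r = (if k = 0 then -(phi t ^ 3) else if k = 1 then phi t * (t * Q r + 1)^2 else phi t)"

definition dgd :: "4 \<Rightarrow> 4 \<Rightarrow> real \<Rightarrow> real \<Rightarrow> real" where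
  "dgd a k t r = (if a = 0 then (if k = 0 then -(3 * phi t^2 * phi' t)
        else if k = 1 then phi' t * (t*Q r+1)^2 + phi t * (2*(t*Q r+1)*Q r) else phi' t)
     else if a = 1 then (if k = 1 then phi t * (2*(t*Q r+1)*(t*Q' r)) else 0) else 0)"

definition ddgd :: "4 \<Rightarrow> 4 \<Rightarrow> 4 \<Rightarrow> real \<Rightarrow> real \<Rightarrow> real" where
  "ddgd a b k t r = (if b = 0 then
       (if a = 0 then (if k = 0 then -(6*phi t*phi' t^2 + 3*phi t^2*phi'' t)
          else if k = 1 then phi'' t*(t*Q r+1)^2 + 4*phi' t*(t*Q r+1)*Q r + 2*phi t*Q r^2 else phi'' t)
        else if a = 1 then (if k = 1 then 2*phi' t*(t*Q r+1)*t*Q' r + 2*phi t*(t*Q' r*Q r + (t*Q r+1)*Q' r) else 0)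
        else 0)
     else if b = 1 then
       (if a = 0 then (if k = 1 then 2*Q' r*(phi' t*(t*Q r+1)*t + phi t*Q r*t + phi t*(t*Q r+1)) else 0)
        else if a = 1 then (if k = 1 then 2*phi t*t*(t*Q' r*Q' r + (t*Q r+1)*Q'' r) else 0) else 0)
     else 0)"

lemma phi_chain: "(g has_real_derivative g') (at x within S) \<Longrightarrow> g x \<in> I \<Longrightarrow> E = phi' (g x) * g' \<Longrightarrow>
   ((\<lambda>x. phi (g x)) has_real_derivative E) (at x within S)"
  using dphi DERIV_chain2 by blast
lemma phi'_chain: "(g has_real_derivative g') (at x within S) \<Longrightarrow> g x \<in> I \<Longrightarrow> E = phi'' (g x) * g' \<Longrightarrow>
   ((\<lambda>x. phi' (g x)) has_real_derivative E) (at x within S)"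
  using dphi DERIV_chain2 by blast
lemma Q_chain: "(g has_real_derivative g') (at x within S) \<Longrightarrow> g x \<in> J \<Longrightarrow> E = Q' (g x) * g' \<Longrightarrow>
   ((\<lambda>x. Q (g x)) has_real_derivative E) (at x within S)"
  using dQ DERIV_chain2 by blast
lemma Q'_chain: "(g has_real_derivative g') (at x within S) \<Longrightarrow> g x \<in> J \<Longrightarrow> E = Q'' (g x) * g' \<Longrightarrow>
   ((\<lambda>x. Q' (g x)) has_real_derivative E) (at x within S)"
  using dQ DERIV_chain2 by blast

lemmas dchain = phi_chain phi'_chain Q_chain Q'_chain

lemma HasP_gd: assumes "t \<in> I" "r \<in> J" shows "HasP a (gd k) (dgd a k t r) t r"
  unfolding HasP_def gd_def dgd_def using assms
  by (auto simp: neq4 intro!: derivative_eq_intros dchain)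
lemma HasP_dgd: assumes "t \<in> I" "r \<in> J" shows "HasP a (dgd b k) (ddgd a b k t r) t r"
  unfolding HasP_def ddgd_def dgd_def using assms
  by (auto simp: neq4 intro!: derivative_eq_intros dchain) (simp_all add: algebra_simps power2_eq_square)


definition U :: "pt set" where "U = {q. tco q \<in> I \<and> rco q \<in> J \<and> tco q * Q (rco q) + 1 \<noteq> 0}"

abbreviation g :: metric where "g \<equiv> metricA phi Q"

lemma contQ: "continuous_on J Q"
  using dQ by (meson DERIV_isCont continuous_at_imp_continuous_on)

lemma openU: "open U"
proof -
  let ?S = "(\<lambda>q::pt. q$0) -` I \<inter> (\<lambda>q::pt. q$1) -` J"
  have oS: "open ?S" using oI oJ by (intro open_Int open_vimage_vec_nth)
  have c: "continuous_on ?S (\<lambda>q::pt. q$0 * Q (q$1) + 1)"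
    by (intro continuous_intros continuous_on_compose2[OF contQ]) auto
  have "open (?S \<inter> (\<lambda>q::pt. q$0 * Q (q$1) + 1) -` (- {0}))"
    by (rule continuous_open_preimage[OF c oS]) auto
  moreover have "?S \<inter> (\<lambda>q::pt. q$0 * Q (q$1) + 1) -` (- {0}) = U"
    unfolding U_def tco_def rco_def by auto
  ultimately show ?thesis by simp
qed

lemma inU: "q \<in> U \<Longrightarrow> q$0 \<in> I \<and> q$1 \<in> J \<and> q$0 * Q (q$1) + 1 \<noteq> 0"
  unfolding U_def tco_def rco_def by auto

lemma gd_nz: "q \<in> U \<Longrightarrow> gd k (q$0) (q$1) \<noteq> 0"
  using inU[of q] dphi unfolding gd_def by auto

lemma metric_eq: "g b c p = (if b = c then gd b (p$0) (p$1) else 0)"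
  unfolding metricA_def gd_def tco_def rco_def by auto

lemma pd_g: assumes "p \<in> U" shows "pd a (g b c) p = (if b = c then dgd a b (p$0) (p$1) else 0)"
proof (rule pd_local[OF openU assms])
  show "\<forall>q\<in>U. g b c q = (if b = c then gd b (q$0) (q$1) else 0)" using metric_eq by auto
  show "HasP a (\<lambda>x y. if b = c then gd b x y else 0) (if b = c then dgd a b (p$0) (p$1) else 0) (p$0) (p$1)"
    using inU[OF assms] by (intro HasP_if HasP_gd) auto
qed

lemma ginv_eq: assumes "p \<in> U" shows "ginv g k l p = (if k = l then 1 / gd k (p$0) (p$1) else 0)"
proof -
  have "matrix_inv (gmat g p) = (\<chi> i j. if i = j then 1 / gd i (p$0) (p$1) else 0)"
    by (rule matrix_inv_diag) (auto simp: gmat_def metric_eq gd_nz[OF assms])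
  then show ?thesis unfolding ginv_def by simp
qed

definition comb :: "4 \<Rightarrow> 4 \<Rightarrow> 4 \<Rightarrow> real \<Rightarrow> real \<Rightarrow> real" where
  "comb k i j t r = (if k = j then dgd i k t r else 0) + (if k = i then dgd j k t r else 0) - (if i = j then dgd k i t r else 0)"
definition combD :: "4 \<Rightarrow> 4 \<Rightarrow> 4 \<Rightarrow> 4 \<Rightarrow> real \<Rightarrow> real \<Rightarrow> real" where
  "combD a k i j t r = (if k = j then ddgd a i k t r else 0) + (if k = i then ddgd a j k t r else 0) - (if i = j then ddgd a k i t r else 0)"
definition Cx :: "4 \<Rightarrow> 4 \<Rightarrow> 4 \<Rightarrow> real \<Rightarrow> real \<Rightarrow> real" where
  "Cx k i j t r = 1/2 * (comb k i j t r / gd k t r)"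
definition DCx :: "4 \<Rightarrow> 4 \<Rightarrow> 4 \<Rightarrow> 4 \<Rightarrow> real \<Rightarrow> real \<Rightarrow> real" where
  "DCx a k i j t r = 1/2 * ((combD a k i j t r * gd k t r - comb k i j t r * dgd a k t r) / (gd k t r)^2)"

lemma HasP_Cx: assumes "q \<in> U" shows "HasP a (Cx k i j) (DCx a k i j (q$0) (q$1)) (q$0) (q$1)"
proof -
  have tr: "q$0 \<in> I" "q$1 \<in> J" using inU[OF assms] by auto
  have c: "HasP a (comb k i j) (combD a k i j (q$0) (q$1)) (q$0) (q$1)"
    unfolding comb_def[abs_def] combD_def
    by (intro HasP_add HasP_diff HasP_if HasP_dgd tr)
  have "HasP a (\<lambda>x y. 1/2 * (comb k i j x y / gd k x y)) (1/2 * ((combD a k i j (q$0) (q$1) * gd k (q$0) (q$1) - comb k i j (q$0) (q$1) * dgd a k (q$0) (q$1)) / (gd k (q$0) (q$1))^2)) (q$0) (q$1)"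
    by (intro HasP_cmult HasP_divide c HasP_gd tr gd_nz assms)
  then show ?thesis unfolding Cx_def[abs_def] DCx_def .
qed

lemma sum_delta4: "(\<Sum>l\<in>UNIV. (if (k::4) = l then c else 0) * X l) = c * (X k :: real)"
proof -
  have "(\<Sum>l\<in>UNIV. (if k = l then c else 0) * X l) = (\<Sum>l\<in>UNIV. if l = k then c * X l else 0)"
    by (rule sum.cong) auto
  also have "\<dots> = c * X k" by simp
  finally show ?thesis .
qed

lemma christoffel_eq: assumes "p \<in> U" shows "christoffel g k i j p = Cx k i j (p$0) (p$1)"
  unfolding christoffel_def ginv_eq[OF assms] pd_g[OF assms] sum_delta4 Cx_def comb_def
  by (simp add: field_simps)

lemma pd_christoffel: assumes "q \<in> U" shows "pd a (christoffel g k i j) q = DCx a k i j (q$0) (q$1)"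
  by (rule pd_local[OF openU assms _ HasP_Cx[OF assms]]) (simp add: christoffel_eq)

lemma ricci_eq: assumes "q \<in> U" shows "ricci g i j q =
  (\<Sum>k\<in>UNIV. DCx k k i j (q$0) (q$1) - DCx j k i k (q$0) (q$1)
     + (\<Sum>l\<in>UNIV. Cx k k l (q$0) (q$1) * Cx l i j (q$0) (q$1) - Cx k j l (q$0) (q$1) * Cx l i k (q$0) (q$1)))"
  unfolding ricci_def pd_christoffel[OF assms] christoffel_eq[OF assms] ..

end

context partA begin

definition "ca t = phi' t / phi t"
definition "cb t r = ca t / 2 + Q r / (t * Q r + 1)"
definition "cc t r = t * Q' r / (t * Q r + 1)"
definition "g11 t r = (t * Q r + 1)^2 * cb t r / phi t ^ 2"
definition "g22 t = ca t / (2 * phi t ^ 2)"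
definition "da t = (phi'' t * phi t - phi' t ^ 2) / phi t ^ 2"
definition "db t r = da t / 2 - Q r ^ 2 / (t * Q r + 1)^2"
definition "de t r = Q' r / (t * Q r + 1)^2"
definition "cX t r = ((2 * (t * Q r + 1) * Q r * cb t r + (t * Q r + 1)^2 * db t r) * phi t ^ 2
     - (t * Q r + 1)^2 * cb t r * (2 * phi t * phi' t)) / (phi t ^ 2)^2"
definition "cY t r = (2 * (t * Q r + 1) * (t * Q' r) * cb t r + (t * Q r + 1)^2 * de t r) * phi t ^ 2 / (phi t ^ 2)^2"
definition "cZ t = (da t * (2 * phi t ^ 2) - ca t * (2 * (2 * phi t * phi' t))) / (2 * phi t ^ 2)^2"
definition "cR t r = (t * Q'' r * (t * Q r + 1) - t^2 * Q' r ^ 2) / (t * Q r + 1)^2"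

lemmas atom_defs = ca_def cb_def cc_def g11_def g22_def da_def db_def de_def cX_def cY_def cZ_def cR_def

definition CT :: "4 \<Rightarrow> 4 \<Rightarrow> 4 \<Rightarrow> real \<Rightarrow> real \<Rightarrow> real" where
  "CT k i j t r =
    (if k = 0 \<and> i = 0 \<and> j = 0 then 3/2 * ca t
     else if k = 0 \<and> i = 1 \<and> j = 1 then g11 t r
     else if k = 0 \<and> i = 2 \<and> j = 2 then g22 t
     else if k = 0 \<and> i = 3 \<and> j = 3 then g22 t
     else if k = 1 \<and> i = 0 \<and> j = 1 then cb t r
     else if k = 1 \<and> i = 1 \<and> j = 0 then cb t r
     else if k = 1 \<and> i = 1 \<and> j = 1 then cc t r
     else if k = 2 \<and> i = 0 \<and> j = 2 then ca t / 2
     else if k = 2 \<and> i = 2 \<and> j = 0 then ca t / 2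
     else if k = 3 \<and> i = 0 \<and> j = 3 then ca t / 2
     else if k = 3 \<and> i = 3 \<and> j = 0 then ca t / 2
     else 0)"

lemma Cx_CT: assumes "phi t > 0" "t * Q r + 1 \<noteq> 0" shows "Cx k i j t r = CT k i j t r"
proof -
  define T where "T = t * Q r + 1"
  have T: "T \<noteq> 0" using assms T_def by simp
  have "\<forall>k i j. Cx k i j t r = CT k i j t r"
    unfolding all4 Cx_def CT_def atom_defs comb_def gd_def dgd_def T_def[symmetric] using assms(1) T
    by (simp add: neq4 field_simps power2_eq_square power3_eq_cube)
  then show ?thesis by blast
qed


definition DT :: "4 \<Rightarrow> 4 \<Rightarrow> 4 \<Rightarrow> 4 \<Rightarrow> real \<Rightarrow> real \<Rightarrow> real" where
  "DT a k i j t r = (if a = 0 then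
    (if k = 0 \<and> i = 0 \<and> j = 0 then 3/2 * da t
     else if k = 0 \<and> i = 1 \<and> j = 1 then cX t r
     else if k = 0 \<and> i = 2 \<and> j = 2 then cZ t
     else if k = 0 \<and> i = 3 \<and> j = 3 then cZ t
     else if k = 1 \<and> i = 0 \<and> j = 1 then db t r
     else if k = 1 \<and> i = 1 \<and> j = 0 then db t r
     else if k = 1 \<and> i = 1 \<and> j = 1 then de t r
     else if k = 2 \<and> i = 0 \<and> j = 2 then da t / 2
     else if k = 2 \<and> i = 2 \<and> j = 0 then da t / 2
     else if k = 3 \<and> i = 0 \<and> j = 3 then da t / 2
     else if k = 3 \<and> i = 3 \<and> j = 0 then da t / 2
     else 0)
   else if a = 1 then
    (if k = 0 \<and> i = 1 \<and> j = 1 then cY t r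
     else if k = 1 \<and> i = 0 \<and> j = 1 then de t r
     else if k = 1 \<and> i = 1 \<and> j = 0 then de t r
     else if k = 1 \<and> i = 1 \<and> j = 1 then cR t r
     else 0)
   else 0)"

lemma HasP_mult: "HasP a F D t r \<Longrightarrow> HasP a G E t r \<Longrightarrow> HasP a (\<lambda>x y. F x y * G x y) (D * G t r + E * F t r) t r"
  unfolding HasP_def by (auto intro: DERIV_mult)
lemma HasP_cdiv: "HasP a F D t r \<Longrightarrow> HasP a (\<lambda>x y. F x y / c) (D / c) t r"
  unfolding HasP_def by (auto intro: DERIV_cdivide)
lemma HasP_pow2: assumes "HasP a F D t r" shows "HasP a (\<lambda>x y. (F x y)^2) (2 * F t r * D) t r"
proof -
  have "HasP a (\<lambda>x y. F x y * F x y) (D * F t r + D * F t r) t r" by (rule HasP_mult[OF assms assms])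
  then show ?thesis by (simp add: power2_eq_square algebra_simps)
qed
lemma HasP_const: "HasP a (\<lambda>x y. c) 0 t r"
  unfolding HasP_def by auto
lemma HasP_eq: "HasP a F D t r \<Longrightarrow> D = D' \<Longrightarrow> HasP a F D' t r"
  by simp
lemma HasP_x: "HasP a (\<lambda>x y. x) (if a = 0 then 1 else 0) t r"
  unfolding HasP_def by (auto intro!: derivative_eq_intros)
lemma HasP_phi: "t \<in> I \<Longrightarrow> HasP a (\<lambda>x y. phi x) (if a = 0 then phi' t else 0) t r"
  unfolding HasP_def using dphi by auto
lemma HasP_phi': "t \<in> I \<Longrightarrow> HasP a (\<lambda>x y. phi' x) (if a = 0 then phi'' t else 0) t r"
  unfolding HasP_def using dphi by auto
lemma HasP_Q: "r \<in> J \<Longrightarrow> HasP a (\<lambda>x y. Q y) (if a = 1 then Q' r else 0) t r"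
  unfolding HasP_def using dQ by auto
lemma HasP_Q': "r \<in> J \<Longrightarrow> HasP a (\<lambda>x y. Q' y) (if a = 1 then Q'' r else 0) t r"
  unfolding HasP_def using dQ by auto

lemma HasP_T: "r \<in> J \<Longrightarrow> HasP a (\<lambda>x y. x * Q y + 1) (if a = 0 then Q r else if a = 1 then t * Q' r else 0) t r"
  by (rule HasP_eq[OF HasP_add[OF HasP_mult[OF HasP_x HasP_Q] HasP_const]]) (auto simp: neq4)

context
  fixes t r assumes tr: "t \<in> I" "r \<in> J" and T0: "t * Q r + 1 \<noteq> 0"
begin

lemma P0: "phi t \<noteq> 0" using dphi tr by force

lemma HasP_ca: "HasP a (\<lambda>x y. ca x) (if a = 0 then da t else 0) t r"
  unfolding ca_def[abs_def]
  by (rule HasP_eq[OF HasP_divide[OF HasP_phi'[OF tr(1)] HasP_phi[OF tr(1)] P0]])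
     (auto simp: da_def power2_eq_square)

lemma HasP_QT: "HasP a (\<lambda>x y. Q y / (x * Q y + 1)) (if a = 0 then - (Q r ^ 2 / (t * Q r + 1)^2) else if a = 1 then de t r else 0) t r"
proof (rule HasP_eq[OF HasP_divide[OF HasP_Q[OF tr(2)] HasP_T[OF tr(2)] T0]])
  have e: "Q' r * (t * Q r + 1) - Q r * (t * Q' r) = Q' r" by (simp add: algebra_simps)
  show "((if a = 1 then Q' r else 0) * (t * Q r + 1) - Q r * (if a = 0 then Q r else if a = 1 then t * Q' r else 0)) / (t * Q r + 1)^2 =
    (if a = 0 then - (Q r ^ 2 / (t * Q r + 1)^2) else if a = 1 then de t r else 0)"
    using e by (auto simp: de_def neq4 power2_eq_square)
qed

lemma HasP_cb: "HasP a cb (if a = 0 then db t r else if a = 1 then de t r else 0) t r"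
  unfolding cb_def[abs_def]
  by (rule HasP_eq[OF HasP_add[OF HasP_cdiv[OF HasP_ca] HasP_QT]]) (auto simp: db_def neq4)

lemma HasP_cc: "HasP a cc (if a = 0 then de t r else if a = 1 then cR t r else 0) t r"
proof -
  have h: "HasP a (\<lambda>x y. x * Q' y) (if a = 0 then Q' r else if a = 1 then t * Q'' r else 0) t r"
    by (rule HasP_eq[OF HasP_mult[OF HasP_x HasP_Q'[OF tr(2)]]]) (auto simp: neq4)
  have e: "Q' r * (t * Q r + 1) - t * Q' r * Q r = Q' r" by (simp add: algebra_simps)
  show ?thesis unfolding cc_def[abs_def]
    by (rule HasP_eq[OF HasP_divide[OF h HasP_T[OF tr(2)] T0]])
       (use e in \<open>auto simp: de_def cR_def neq4 power2_eq_square algebra_simps\<close>)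
qed

lemma HasP_g11: "HasP a g11 (if a = 0 then cX t r else if a = 1 then cY t r else 0) t r"
  unfolding g11_def[abs_def]
  by (rule HasP_eq[OF HasP_divide[OF HasP_mult[OF HasP_pow2[OF HasP_T[OF tr(2)]] HasP_cb] HasP_pow2[OF HasP_phi[OF tr(1)]]]])
     (auto simp: P0 cX_def cY_def neq4)

lemma HasP_g22: "HasP a (\<lambda>x y. g22 x) (if a = 0 then cZ t else 0) t r"
  unfolding g22_def[abs_def]
  by (rule HasP_eq[OF HasP_divide[OF HasP_ca HasP_cmult[OF HasP_pow2[OF HasP_phi[OF tr(1)]]]]])
     (auto simp: P0 cZ_def neq4)

lemma HasP_CT: "HasP a (CT k i j) (DT a k i j t r) t r"
proof -
  have c0: "HasP a (\<lambda>x y. 0) 0 t r" by (rule HasP_const)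
  have A: "HasP a' (\<lambda>x y. 3 * ca x / 2) (if a' = 0 then 3 * da t / 2 else 0) t r" for a'

    by (rule HasP_eq[OF HasP_cdiv[OF HasP_cmult[OF HasP_ca]]]) simp
  have A0: "HasP 0 (\<lambda>x y. 3 * ca x / 2) (3 * da t / 2) t r" using A[of 0] by simp
  have A1: "a \<noteq> 0 \<Longrightarrow> HasP a (\<lambda>x y. 3 * ca x / 2) 0 t r" using A[of a] by simp
  have B: "HasP a (\<lambda>x y. ca x / 2) (if a = 0 then da t / 2 else 0) t r"
    by (rule HasP_eq[OF HasP_cdiv[OF HasP_ca]]) simp
  have "\<forall>k i j. HasP a (CT k i j) (DT a k i j t r) t r"
    unfolding all4
    by (simp add: CT_def[abs_def] DT_def neq4 c0 A0 A1 B HasP_cb HasP_cc HasP_g11 HasP_g22 cong: if_cong)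
  then show ?thesis by blast
qed

end

end

context partA begin

definition RicT :: "4 \<Rightarrow> 4 \<Rightarrow> real \<Rightarrow> real \<Rightarrow> real" where
  "RicT i j t r = (\<Sum>k\<in>UNIV. DT k k i j t r - DT j k i k t r
     + (\<Sum>l\<in>UNIV. CT k k l t r * CT l i j t r - CT k j l t r * CT l i k t r))"

definition "R00 t r = - da t - db t r + ca t ^ 2 + 3/2 * ca t * cb t r - cb t r ^ 2"
definition "R11 t r = cX t r + (5/2 * ca t - cb t r) * g11 t r"
definition "R22 t r = cZ t + (3/2 * ca t) * g22 t + cb t r * g22 t"

lemma RicT_eq: "RicT i j t r = (if i = j then (if i = 0 then R00 t r else if i = 1 then R11 t r else R22 t r) else 0)"
proof -
  have "\<forall>i j. RicT i j t r = (if i = j then (if i = 0 then R00 t r else if i = 1 then R11 t r else R22 t r) else 0)"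
    unfolding all4 RicT_def sum4 CT_def DT_def R00_def R11_def R22_def
    by (simp add: neq4 algebra_simps power2_eq_square)
  then show ?thesis by blast
qed

end

context partA begin

definition "Sc t r = 1 / gd 0 t r * R00 t r + 1 / gd 1 t r * R11 t r + 1 / gd 2 t r * R22 t r + 1 / gd 3 t r * R22 t r"
definition "rhov t r = 1 / phi t ^ 3 * (3/4 * (phi' t)^2 / (phi t)^2 + phi' t * Q r / (phi t * (t * Q r + 1)))"
definition "prv t = 1 / phi t ^ 3 * (7/4 * (phi' t)^2 / (phi t)^2 - phi'' t / phi t)"

context
  fixes t r assumes P: "phi t > 0" and T0: "t * Q r + 1 \<noteq> 0"
begin

lemma R00_cf: "R00 t r = -3/2 * phi'' t / phi t + 3 * (phi' t / phi t)^2 + phi' t * Q r / (2 * phi t * (t * Q r + 1))"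
proof -
  define T where "T = t * Q r + 1"
  have T: "T \<noteq> 0" using T0 T_def by simp
  show ?thesis
  unfolding R00_def atom_defs T_def[symmetric]
  using P T
  apply (simp add: field_simps)
  apply algebra
  done
qed

lemma R22_cf: "R22 t r = phi'' t / (2 * phi t ^ 3) - phi' t ^ 2 / (2 * phi t ^ 4) + phi' t * Q r / (2 * phi t ^ 3 * (t * Q r + 1))"
proof -
  define T where "T = t * Q r + 1"
  have T: "T \<noteq> 0" using T0 T_def by simp
  show ?thesis
  unfolding R22_def atom_defs T_def[symmetric]
  using P T
  apply (simp add: field_simps)
  apply algebra
  done
qed

lemma R11_cf: "R11 t r = (t * Q r + 1)^2 * R22 t r"
proof -
  define T where "T = t * Q r + 1"
  have T: "T \<noteq> 0" using T0 T_def by simp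
  show ?thesis
  unfolding R11_def R22_cf atom_defs T_def[symmetric]
  using P T
  apply (simp add: field_simps)
  apply algebra
  done
qed

lemma Sc_cf: "Sc t r = - R00 t r / phi t ^ 3 + 3 * R22 t r / phi t"
  unfolding Sc_def R11_cf gd_def using P T0 by (simp add: neq4 field_simps)

lemma E00: "R00 t r - 1/2 * gd 0 t r * Sc t r = (rhov t r + prv t) * (gd 0 t r * gd 0 t r / phi t ^ 3) + prv t * gd 0 t r"
proof -
  define T where "T = t * Q r + 1"
  have T: "T \<noteq> 0" using T0 T_def by simp
  show ?thesis
  unfolding Sc_cf R00_cf R22_cf rhov_def prv_def gd_def T_def[symmetric]
  using P T
  apply (simp add: field_simps)
  apply algebra
  done
qed

lemma E22: "R22 t r - 1/2 * gd 2 t r * Sc t r = prv t * gd 2 t r"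
proof -
  define T where "T = t * Q r + 1"
  have T: "T \<noteq> 0" using T0 T_def by simp
  show ?thesis
  unfolding Sc_cf R00_cf R22_cf rhov_def prv_def gd_def T_def[symmetric]
  using P T
  apply (simp add: field_simps neq4)
  apply (rule disjI2)
  apply (simp add: numeral_eq_Suc)
  done
qed

lemma E11: "R11 t r - 1/2 * gd 1 t r * Sc t r = prv t * gd 1 t r"
proof -
  have "R11 t r - 1/2 * gd 1 t r * Sc t r = (t * Q r + 1)^2 * (R22 t r - 1/2 * gd 2 t r * Sc t r)"
    unfolding R11_cf gd_def by (simp add: neq4 algebra_simps)
  also have "\<dots> = prv t * gd 1 t r" unfolding E22 by (simp add: gd_def neq4)
  finally show ?thesis .
qed

end
end

context partA begin

lemma pd_chr: assumes "q \<in> U" shows "pd a (christoffel g k i j) q = DT a k i j (q$0) (q$1)"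
proof (rule pd_local[OF openU assms])
  show "\<forall>p\<in>U. christoffel g k i j p = CT k i j (p$0) (p$1)"
  proof
    fix p assume p: "p \<in> U"
    have "phi (p$0) > 0" "p$0 * Q (p$1) + 1 \<noteq> 0" using inU[OF p] dphi by auto
    then show "christoffel g k i j p = CT k i j (p$0) (p$1)" using christoffel_eq[OF p] Cx_CT by simp
  qed
  show "HasP a (CT k i j) (DT a k i j (q$0) (q$1)) (q$0) (q$1)"
    using inU[OF assms] by (intro HasP_CT) auto
qed

lemma ricci_eq2: assumes "q \<in> U" shows "ricci g i j q = RicT i j (q$0) (q$1)"
proof -
  have c: "christoffel g k i j q = CT k i j (q$0) (q$1)" for k i j
    using inU[OF assms] dphi christoffel_eq[OF assms] Cx_CT by simp
  show ?thesis unfolding ricci_def RicT_def pd_chr[OF assms] c ..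
qed

lemma scalar_eq: assumes "q \<in> U" shows "scalar_curv g q = Sc (q$0) (q$1)"
  unfolding scalar_curv_def ginv_eq[OF assms] sum_delta4 ricci_eq2[OF assms] RicT_eq Sc_def sum4
  by (simp add: neq4)

lemma einstein_eq: assumes "q \<in> U" shows "einstein g i j q =
   (if i = j then (if i = 0 then R00 (q$0) (q$1) else if i = 1 then R11 (q$0) (q$1) else R22 (q$0) (q$1)) else 0)
   - 1/2 * (if i = j then gd i (q$0) (q$1) else 0) * Sc (q$0) (q$1)"
  unfolding einstein_def ricci_eq2[OF assms] RicT_eq scalar_eq[OF assms] metric_eq by simp

definition "uA i q = (if i = 0 then phi (tco q) powr (-3/2) else 0)"
definition "rhoA q = (let t = tco q; r = rco q in
            (phi t powr (-3)) * (3/4 * (phi' t)^2 / (phi t)^2 + phi' t * Q r / (phi t * (t * Q r + 1))))"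
definition "prA q = (let t = tco q in (phi t powr (-3)) * (7/4 * (phi' t)^2 / (phi t)^2 - phi'' t / phi t))"

lemma fluid_at: assumes q: "q \<in> U" shows
  "(\<forall>i j. g i j q = g j i q) \<and> det (gmat g q) \<noteq> 0 \<and>
        (\<Sum>i\<in>UNIV. \<Sum>j\<in>UNIV. g i j q * uA i q * uA j q) = -1 \<and>
        (\<forall>i j. einstein g i j q =
            (rhoA q + prA q) * (\<Sum>k\<in>UNIV. g i k q * uA k q) * (\<Sum>k\<in>UNIV. g j k q * uA k q)
            + prA q * g i j q)"
proof -
    define t where "t = q$0"
    define r where "r = q$1"
    have tr: "t \<in> I" "r \<in> J" and T0: "t * Q r + 1 \<noteq> 0" using inU[OF q] t_def r_def by auto
    have P: "phi t > 0" using dphi tr by auto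
    have tq: "tco q = t" "rco q = r" unfolding tco_def rco_def t_def r_def by simp_all
    define w where "w = phi t powr (-3/2)"
    have ww: "w * w = 1 / phi t ^ 3"
      unfolding w_def using P by (simp add: powr_add[symmetric] powr_neg_numeral)
    have p3: "phi t powr (-3) = 1 / phi t ^ 3" using P by (simp add: powr_neg_numeral)
    have gu: "(\<Sum>k\<in>UNIV. g i k q * uA k q) = (if i = 0 then gd 0 t r * w else 0)" for i
    proof -
      have "(\<Sum>k\<in>UNIV. g i k q * uA k q) = (\<Sum>k\<in>UNIV. (if i = k then gd i t r else 0) * (if k = 0 then w else 0))"
        by (rule sum.cong) (auto simp: metric_eq t_def r_def tq w_def uA_def)
      also have "\<dots> = (if i = 0 then gd 0 t r * w else 0)" unfolding sum_delta4 by simp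
      finally show ?thesis .
    qed
    have det: "det (gmat g q) \<noteq> 0"
    proof -
      have "det (gmat g q) = prod (\<lambda>i. gmat g q $ i $ i) UNIV"
        by (rule det_diagonal) (simp add: gmat_def metric_eq)
      also have "\<dots> \<noteq> 0" using gd_nz[OF q] by (simp add: gmat_def metric_eq)
      finally show ?thesis .
    qed
    have uu: "(\<Sum>i\<in>UNIV. \<Sum>j\<in>UNIV. g i j q * uA i q * uA j q) = -1"
    proof -
      have "(\<Sum>i\<in>UNIV. \<Sum>j\<in>UNIV. g i j q * uA i q * uA j q) = gd 0 t r * (w * w)"
        unfolding sum4 by (simp add: metric_eq neq4 t_def r_def tq w_def uA_def)
      also have "\<dots> = -1" unfolding ww gd_def using P by simp
      finally show ?thesis .
    qed
    have rho: "rhoA q = rhov t r"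
      unfolding rhoA_def tq Let_def rhov_def p3 ..
    have pr: "prA q = prv t"
      unfolding prA_def tq Let_def prv_def p3 ..
    have E: "einstein g i j q = (rhov t r + prv t) * (if i = 0 then gd 0 t r * w else 0) * (if j = 0 then gd 0 t r * w else 0)
                + prv t * g i j q" for i j
    proof -
      have e: "einstein g i j q = (if i = j then (if i = 0 then R00 t r else if i = 1 then R11 t r else R22 t r) else 0)
         - 1/2 * (if i = j then gd i t r else 0) * Sc t r" using einstein_eq[OF q] t_def r_def by simp
      have gij: "g i j q = (if i = j then gd i t r else 0)" by (simp add: metric_eq t_def r_def)
      have gw0: "gd 0 t r * gd 0 t r / phi t ^ 3 = gd 0 t r * gd 0 t r * (w * w)" using ww by simp
      have gw: "(rhov t r + prv t) * (gd 0 t r * w) * (gd 0 t r * w) = (rhov t r + prv t) * (gd 0 t r * gd 0 t r / phi t ^ 3)"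
        unfolding gw0 by (simp add: algebra_simps)
      have E0: "R00 t r - 1/2 * gd 0 t r * Sc t r = (rhov t r + prv t) * (gd 0 t r * w) * (gd 0 t r * w) + prv t * gd 0 t r"
        unfolding gw by (rule E00[OF P T0])
      have g32: "gd 3 t r = gd 2 t r" by (simp add: gd_def neq4)
      have "\<forall>i j. (if i = j then (if i = 0 then R00 t r else if i = 1 then R11 t r else R22 t r) else 0)
         - 1/2 * (if i = j then gd i t r else 0) * Sc t r =
         (rhov t r + prv t) * (if i = 0 then gd 0 t r * w else 0) * (if j = 0 then gd 0 t r * w else 0)
                + prv t * (if i = j then gd i t r else 0)"
        unfolding all4 using E0 E11[OF P T0] E22[OF P T0] g32 by (simp add: neq4 neq4[symmetric])
      then show ?thesis unfolding e gij by blast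
    qed
    have sym: "\<forall>i j. g i j q = g j i q" by (simp add: metric_eq)
    show ?thesis using sym det uu E gu rho pr by simp
qed

theorem resultA:
  "plane_symmetric g U \<and>
   perfect_fluid_solution g U
     (\<lambda>i q. if i = 0 then phi (tco q) powr (-3/2) else 0)
     (\<lambda>q. let t = tco q; r = rco q in
            (phi t powr (-3)) * (3/4 * (phi' t)^2 / (phi t)^2 + phi' t * Q r / (phi t * (t * Q r + 1))))
     (\<lambda>q. let t = tco q in (phi t powr (-3)) * (7/4 * (phi' t)^2 / (phi t)^2 - phi'' t / phi t))"
proof
  have c1: "\<forall>q\<in>U. \<forall>a b. (\<chi> j. if j = 2 then a else if j = 3 then b else q $ j) \<in> U"
    unfolding U_def tco_def rco_def by (simp add: neq4)
  have c2: "\<forall>q\<in>U. \<forall>q'\<in>U. q $ 0 = q' $ 0 \<and> q $ 1 = q' $ 1 \<longrightarrow> (\<forall>i j. g i j q = g i j q')"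
    by (simp add: metric_eq)
  have c3: "\<forall>q\<in>U. g 2 2 q = g 3 3 q \<and> g 2 3 q = 0 \<and> g 3 2 q = 0 \<and>
        (\<forall>a\<in>{0,1}. \<forall>b\<in>{2,3}. g a b q = 0 \<and> g b a q = 0)"
    by (auto simp: metric_eq gd_def neq4 neq4[symmetric])
  show "plane_symmetric g U" unfolding plane_symmetric_def using c1 c2 c3 by blast
next
  have e: "(\<lambda>i q. if i = 0 then phi (tco q) powr (-3/2) else 0) = uA"
    "(\<lambda>q. let t = tco q; r = rco q in
            (phi t powr (-3)) * (3/4 * (phi' t)^2 / (phi t)^2 + phi' t * Q r / (phi t * (t * Q r + 1)))) = rhoA"
    "(\<lambda>q. let t = tco q in (phi t powr (-3)) * (7/4 * (phi' t)^2 / (phi t)^2 - phi'' t / phi t)) = prA"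
    by (auto simp: uA_def[abs_def] rhoA_def[abs_def] prA_def[abs_def])
  show "perfect_fluid_solution g U
     (\<lambda>i q. if i = 0 then phi (tco q) powr (-3/2) else 0)
     (\<lambda>q. let t = tco q; r = rco q in
            (phi t powr (-3)) * (3/4 * (phi' t)^2 / (phi t)^2 + phi' t * Q r / (phi t * (t * Q r + 1))))
     (\<lambda>q. let t = tco q in (phi t powr (-3)) * (7/4 * (phi' t)^2 / (phi t)^2 - phi'' t / phi t))"
    unfolding e perfect_fluid_solution_def using openU fluid_at by blast
qed

end

lemma open_interval_einterval:
  fixes I :: "real set"
  assumes o: "open I" and iv: "is_interval I" and ne: "I \<noteq> {}"
  shows "I = einterval (Inf (ereal ` I)) (Sup (ereal ` I))"
proof (intro set_eqI iffI)
  fix x assume x: "x \<in> I"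
  obtain e where e: "e > 0" "ball x e \<subseteq> I" using o x open_contains_ball by blast
  have l: "x - e/2 \<in> I" "x + e/2 \<in> I" using e by (auto simp: dist_real_def intro!: subsetD[OF e(2)])
  have "Inf (ereal ` I) \<le> ereal (x - e/2)" using l by (intro INF_lower) auto
  also have "\<dots> < ereal x" using e by simp
  finally have a: "Inf (ereal ` I) < ereal x" .
  have "ereal x < ereal (x + e/2)" using e by simp
  also have "\<dots> \<le> Sup (ereal ` I)" using l by (intro SUP_upper) auto
  finally have b: "ereal x < Sup (ereal ` I)" .
  show "x \<in> einterval (Inf (ereal ` I)) (Sup (ereal ` I))" using a b by (simp add: einterval_iff)
next
  fix x assume "x \<in> einterval (Inf (ereal ` I)) (Sup (ereal ` I))"
  then have a: "Inf (ereal ` I) < ereal x" and b: "ereal x < Sup (ereal ` I)" by (auto simp: einterval_iff)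
  obtain y where y: "y \<in> I" "ereal y < ereal x" using a by (auto simp: Inf_less_iff)
  obtain z where z: "z \<in> I" "ereal x < ereal z" using b by (auto simp: less_Sup_iff)
  show "x \<in> I" using iv y z unfolding is_interval_1 by (meson ereal_less_eq(3) less_imp_le)
qed

lemma antideriv:
  fixes g :: "real \<Rightarrow> real"
  assumes "open I" "is_interval I" "I \<noteq> {}" and c: "\<forall>x\<in>I. isCont g x"
  shows "\<exists>F. \<forall>x\<in>I. (F has_real_derivative g x) (at x)"
proof -
  let ?a = "Inf (ereal ` I)" and ?b = "Sup (ereal ` I)"
  have I: "I = einterval ?a ?b" by (rule open_interval_einterval[OF assms(1-3)])
  obtain x where x: "x \<in> I" using assms(3) by blast
  have "x \<in> einterval ?a ?b" using x I by simp
  then have ab: "?a < ?b" unfolding einterval_iff using less_trans by blast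
  have "\<exists>F. \<forall>x :: real. ?a < x \<longrightarrow> x < ?b \<longrightarrow> (F has_vector_derivative g x) (at x)"
    by (rule einterval_antiderivative[OF ab]) (use c I in \<open>auto simp: einterval_iff\<close>)
  then obtain F where F: "\<forall>x :: real. ?a < x \<longrightarrow> x < ?b \<longrightarrow> (F has_vector_derivative g x) (at x)" by blast
  show ?thesis
  proof (intro exI ballI)
    fix y assume "y \<in> I"
    then have "?a < y" "y < ?b" using I by (auto simp: einterval_iff)
    then show "(F has_real_derivative g y) (at y)" using F by (simp add: has_real_derivative_iff_has_vector_derivative)
  qed
qed

lemma inv_fun:
  fixes S s' :: "real \<Rightarrow> real"
  assumes o: "open I" and iv: "is_interval I"
      and d: "\<forall>x\<in>I. (S has_real_derivative s' x) (at x)" and pos: "\<forall>x\<in>I. s' x > 0"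
  shows "open (S ` I) \<and> bij_betw (the_inv_into I S) (S ` I) I \<and> (\<forall>y\<in>S ` I. S (the_inv_into I S y) = y \<and> the_inv_into I S y \<in> I)
     \<and> (\<forall>x\<in>I. the_inv_into I S (S x) = x)
     \<and> (\<forall>y\<in>S ` I. (the_inv_into I S has_real_derivative inverse (s' (the_inv_into I S y))) (at y))"
proof -
  let ?f = "the_inv_into I S"
  have ct: "isCont S x" if "x \<in> I" for x using d that DERIV_isCont by blast
  have mono: "S x < S y" if "x \<in> I" "y \<in> I" "x < y" for x y
  proof (rule DERIV_pos_imp_increasing[OF that(3)])
    fix z assume "x \<le> z" "z \<le> y"
    then have "z \<in> I" using iv that unfolding is_interval_1 by blast
    then show "\<exists>D. DERIV S z :> D \<and> D > 0" using d pos by blast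
  qed
  have inj: "inj_on S I"
    by (rule inj_onI) (metis mono less_irrefl linorder_neqE_linordered_idom)
  have bij: "bij_betw ?f (S ` I) I" by (rule bij_betw_the_inv_into[OF inj_on_imp_bij_betw[OF inj]])
  have fS: "\<forall>y\<in>S ` I. S (?f y) = y \<and> ?f y \<in> I"
    using inj by (auto simp: f_the_inv_into_f the_inv_into_f_f)
  have Sf: "\<forall>x\<in>I. ?f (S x) = x" using inj by (simp add: the_inv_into_f_f)
  have loc: "\<exists>dd>0. cball x dd \<subseteq> I \<and> S (x - dd) < S x \<and> S x < S (x + dd) \<and> {S (x - dd)<..<S (x + dd)} \<subseteq> S ` I" if x: "x \<in> I" for x
  proof -
    obtain dd where dd: "dd > 0" "cball x dd \<subseteq> I" using o x open_contains_cball by blast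
    have m: "x - dd \<in> I" "x + dd \<in> I" using dd by (auto simp: dist_real_def intro!: subsetD[OF dd(2)])
    have l: "S (x - dd) < S x" "S x < S (x + dd)" using mono m x dd by auto
    have "{S (x - dd)<..<S (x + dd)} \<subseteq> S ` I"
    proof
      fix z assume z: "z \<in> {S (x - dd)<..<S (x + dd)}"
      have "\<exists>w. x - dd \<le> w \<and> w \<le> x + dd \<and> S w = z"
      proof (rule IVT)
        show "\<forall>w. x - dd \<le> w \<and> w \<le> x + dd \<longrightarrow> isCont S w"
          using dd ct by (auto simp: dist_real_def intro!: ct subsetD[OF dd(2)])
      qed (use z dd in auto)
      then obtain w where "x - dd \<le> w" "w \<le> x + dd" "S w = z" by blast
      moreover then have "w \<in> I" using dd by (auto simp: dist_real_def intro!: subsetD[OF dd(2)])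
      ultimately show "z \<in> S ` I" by blast
    qed
    then show ?thesis using dd l by blast
  qed
  have op: "open (S ` I)"
    unfolding open_contains_ball
  proof
    fix y assume "y \<in> S ` I"
    then obtain x where x: "x \<in> I" "y = S x" by blast
    obtain dd where dd: "dd > 0" "cball x dd \<subseteq> I" "S (x - dd) < S x" "S x < S (x + dd)" "{S (x - dd)<..<S (x + dd)} \<subseteq> S ` I"
      using loc[OF x(1)] by blast
    let ?e = "min (S x - S (x - dd)) (S (x + dd) - S x)"
    have "ball y ?e \<subseteq> {S (x - dd)<..<S (x + dd)}" using x by (auto simp: dist_real_def)
    then show "\<exists>e>0. ball y e \<subseteq> S ` I" using dd by (intro exI[of _ ?e]) auto
  qed
  have der: "(?f has_real_derivative inverse (s' (?f y))) (at y)" if y: "y \<in> S ` I" for y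
  proof -
    obtain x where x: "x \<in> I" "y = S x" using y by blast
    obtain dd where dd: "dd > 0" "cball x dd \<subseteq> I" "S (x - dd) < S x" "S x < S (x + dd)" "{S (x - dd)<..<S (x + dd)} \<subseteq> S ` I"
      using loc[OF x(1)] by blast
    have fy: "?f y = x" using x Sf by simp
    have ic: "isCont ?f (S x)"
    proof (rule isCont_inverse_function[where f = S and g = "the_inv_into I S" and x = x, OF dd(1)])
      fix z assume "\<bar>z - x\<bar> \<le> dd"
      then have "z \<in> I" using dd by (auto simp: dist_real_def intro!: subsetD[OF dd(2)])
      then show "?f (S z) = z" using Sf by auto
    next
      fix z assume "\<bar>z - x\<bar> \<le> dd"
      then have "z \<in> I" using dd by (auto simp: dist_real_def intro!: subsetD[OF dd(2)])
      then show "isCont S z" using ct by auto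
    qed
    show ?thesis
    proof (rule DERIV_inverse_function[where a = "S (x - dd)" and b = "S (x + dd)"])
      show "DERIV S (?f y) :> s' (?f y)" using fy x d by simp
      show "s' (?f y) \<noteq> 0" using fy x pos by (simp add: less_imp_neq[symmetric])
      show "S (x - dd) < y" "y < S (x + dd)" using dd x by auto
      show "\<And>z. S (x - dd) < z \<Longrightarrow> z < S (x + dd) \<Longrightarrow> S (?f z) = z" using dd fS by auto
      show "isCont ?f y" using ic x by simp
    qed
  qed
  show ?thesis using op bij fS Sf der by blast
qed

lemma const_sign:
  fixes B :: "real \<Rightarrow> real"
  assumes iv: "is_interval J" and c: "\<forall>r\<in>J. isCont B r" and nz: "\<forall>r\<in>J. B r \<noteq> 0" and r0: "r0 \<in> J"
  shows "\<forall>r\<in>J. sgn (B r0) * B r > 0"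
proof
  fix r assume r: "r \<in> J"
  have seg: "\<forall>w. min r0 r \<le> w \<and> w \<le> max r0 r \<longrightarrow> w \<in> J"
    using iv r r0 unfolding is_interval_1 by (metis min_def max_def)
  have nos: "\<not> (B r0 > 0 \<and> B r < 0)" and nos2: "\<not> (B r0 < 0 \<and> B r > 0)"
  proof -
    { assume a: "B r0 > 0 \<and> B r < 0" "r0 \<le> r"
      have "\<exists>w. r0 \<le> w \<and> w \<le> r \<and> B w = 0" using a seg c by (intro IVT2) auto
      then have False using seg nz by (metis a(2) max.absorb2 min.absorb1) }
    moreover
    { assume a: "B r0 > 0 \<and> B r < 0" "r \<le> r0"
      have "\<exists>w. r \<le> w \<and> w \<le> r0 \<and> B w = 0" using a seg c by (intro IVT) auto
      then have False using seg nz by (metis a(2) max.absorb1 min.absorb2) }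
    moreover
    { assume a: "B r0 < 0 \<and> B r > 0" "r0 \<le> r"
      have "\<exists>w. r0 \<le> w \<and> w \<le> r \<and> B w = 0" using a seg c by (intro IVT) auto
      then have False using seg nz by (metis a(2) max.absorb2 min.absorb1) }
    moreover
    { assume a: "B r0 < 0 \<and> B r > 0" "r \<le> r0"
      have "\<exists>w. r \<le> w \<and> w \<le> r0 \<and> B w = 0" using a seg c by (intro IVT2) auto
      then have False using seg nz by (metis a(2) max.absorb1 min.absorb2) }
    ultimately show "\<not> (B r0 > 0 \<and> B r < 0)" "\<not> (B r0 < 0 \<and> B r > 0)" by (meson linear)+
  qed
  show "sgn (B r0) * B r > 0"
    using nos nos2 nz r r0 by (cases "B r0 > 0") (auto simp: sgn_if linorder_neq_iff mult_neg_neg)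
qed

locale partB =
  fixes I J :: "real set" and phi phi' phi'' v v' a1 a1' a1'' a2 a2' a2'' Q Q' Q'' :: "real \<Rightarrow> real"
  assumes oI: "open I" and ivI: "is_interval I" and neI: "I \<noteq> {}"
    and oJ: "open J" and ivJ: "is_interval J" and neJ: "J \<noteq> {}"
    and dI: "\<forall>t\<in>I. 0 < phi t \<and> 0 < v t
         \<and> (phi has_real_derivative phi' t) (at t) \<and> (phi' has_real_derivative phi'' t) (at t)
         \<and> (v has_real_derivative v' t) (at t)
         \<and> (a1 has_real_derivative a1' t) (at t) \<and> (a1' has_real_derivative a1'' t) (at t)
         \<and> (a2 has_real_derivative a2' t) (at t) \<and> (a2' has_real_derivative a2'' t) (at t)"
    and dJ: "\<forall>r\<in>J. (Q has_real_derivative Q' r) (at r) \<and> (Q' has_real_derivative Q'' r) (at r)"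
    and ode: "\<forall>t\<in>I. \<forall>r\<in>J.
         2 * v t * phi t * (a1'' t + a2'' t * Q r)
         + (v' t * phi t + 3 * v t * phi' t) * (a1' t + a2' t * Q r) = 0"
    and nz: "\<forall>t\<in>I. \<forall>r\<in>J. a1 t + a2 t * Q r \<noteq> 0"
begin

lemma chainI:
  assumes "\<forall>t\<in>I. (F has_real_derivative F' t) (at t)"
  shows "(g has_real_derivative g') (at x within S) \<Longrightarrow> g x \<in> I \<Longrightarrow>
   ((\<lambda>x. F (g x)) has_real_derivative F' (g x) * g') (at x within S)"
  using assms DERIV_chain2 by blast

lemma chainJ:
  assumes "\<forall>t\<in>J. (F has_real_derivative F' t) (at t)"
  shows "(g has_real_derivative g') (at x within S) \<Longrightarrow> g x \<in> J \<Longrightarrow>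
   ((\<lambda>x. F (g x)) has_real_derivative F' (g x) * g') (at x within S)"
  using assms DERIV_chain2 by blast

lemmas phi_ch = chainI[of phi phi'] and phi'_ch = chainI[of phi' phi''] and v_ch = chainI[of v v']
lemmas a1_ch = chainI[of a1 a1'] and a1'_ch = chainI[of a1' a1''] and a2_ch = chainI[of a2 a2'] and a2'_ch = chainI[of a2' a2'']
lemmas Q_ch = chainJ[of Q Q'] and Q'_ch = chainJ[of Q' Q'']

lemma dphi: "\<forall>t\<in>I. (phi has_real_derivative phi' t) (at t)" using dI by blast
lemma dphi': "\<forall>t\<in>I. (phi' has_real_derivative phi'' t) (at t)" using dI by blast
lemma dv: "\<forall>t\<in>I. (v has_real_derivative v' t) (at t)" using dI by blast
lemma da1: "\<forall>t\<in>I. (a1 has_real_derivative a1' t) (at t)" using dI by blast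
lemma da1': "\<forall>t\<in>I. (a1' has_real_derivative a1'' t) (at t)" using dI by blast
lemma da2: "\<forall>t\<in>I. (a2 has_real_derivative a2' t) (at t)" using dI by blast
lemma da2': "\<forall>t\<in>I. (a2' has_real_derivative a2'' t) (at t)" using dI by blast
lemma dQ: "\<forall>r\<in>J. (Q has_real_derivative Q' r) (at r)" using dJ by blast
lemma dQ': "\<forall>r\<in>J. (Q' has_real_derivative Q'' r) (at r)" using dJ by blast

lemmas chs = phi_ch[OF dphi] phi'_ch[OF dphi'] v_ch[OF dv] a1_ch[OF da1] a1'_ch[OF da1'] a2_ch[OF da2] a2'_ch[OF da2']
   Q_ch[OF dQ] Q'_ch[OF dQ']

definition W :: "real \<Rightarrow> real" where "W t = phi t * sqrt (phi t * v t)"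
definition W' :: "real \<Rightarrow> real" where
  "W' t = phi' t * sqrt (phi t * v t) + phi t * ((phi' t * v t + phi t * v' t) / (2 * sqrt (phi t * v t)))"

lemma W_pos: "t \<in> I \<Longrightarrow> W t > 0" using dI by (simp add: W_def)

lemma W_deriv: assumes t: "t \<in> I" shows "(W has_real_derivative W' t) (at t)"
proof -
  have p: "phi t * v t > 0" using dI t by simp
  show ?thesis unfolding W_def[abs_def] W'_def
    using t p by (auto intro!: derivative_eq_intros chs simp: divide_simps)
qed

lemma W_cont: "t \<in> I \<Longrightarrow> isCont W t" using W_deriv DERIV_isCont by blast

lemma K_deriv0: assumes t: "t \<in> I" and r: "r \<in> J"
  shows "((\<lambda>t. (a1' t + a2' t * Q r) * W t) has_real_derivative 0) (at t)"
proof -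
  define s where "s = sqrt (phi t * v t)"
  have p: "phi t * v t > 0" using dI t by simp
  have s0: "s > 0" using p s_def by simp
  have s2: "s * s = phi t * v t" using p s_def by (simp add: real_sqrt_mult_self)
  have o: "2 * v t * phi t * (a1'' t + a2'' t * Q r) + (v' t * phi t + 3 * v t * phi' t) * (a1' t + a2' t * Q r) = 0"
    using ode t r by blast
  have d: "((\<lambda>t. (a1' t + a2' t * Q r) * W t) has_real_derivative
      (a1'' t + a2'' t * Q r) * W t + W' t * (a1' t + a2' t * Q r)) (at t)"
    using t by (auto intro!: derivative_eq_intros chs W_deriv)
  have "((a1'' t + a2'' t * Q r) * W t + W' t * (a1' t + a2' t * Q r)) * (2 * s)
        = phi t * (2 * v t * phi t * (a1'' t + a2'' t * Q r) + (v' t * phi t + 3 * v t * phi' t) * (a1' t + a2' t * Q r))"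
    unfolding W_def W'_def s_def[symmetric] using s0 s2
    by (simp add: field_simps) algebra
  then have "(a1'' t + a2'' t * Q r) * W t + W' t * (a1' t + a2' t * Q r) = 0" using o s0 by simp
  then show ?thesis using d by simp
qed

end

context partB begin

definition "t0 = (SOME t. t \<in> I)"
definition "r0 = (SOME r. r \<in> J)"
lemma t0I: "t0 \<in> I" unfolding t0_def using neI by (simp add: some_in_eq)
lemma r0J: "r0 \<in> J" unfolding r0_def using neJ by (simp add: some_in_eq)

definition "Aa r = (a1' t0 + a2' t0 * Q r) * W t0"
definition "Bb r = a1 t0 + a2 t0 * Q r"

lemma K_const: assumes r: "r \<in> J" and t: "t \<in> I" shows "(a1' t + a2' t * Q r) * W t = Aa r"
proof -
  have "\<exists>c. \<forall>x\<in>I. (a1' x + a2' x * Q r) * W x = c"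
    by (rule has_field_derivative_zero_constant)
       (use ivI K_deriv0[OF _ r] in \<open>auto simp: is_interval_convex_1 intro: has_field_derivative_at_within\<close>)
  then obtain c where c: "\<forall>x\<in>I. (a1' x + a2' x * Q r) * W x = c" by blast
  show ?thesis using c t t0I unfolding Aa_def by simp
qed

lemma S_ex: "\<exists>S. (\<forall>t\<in>I. (S has_real_derivative 1 / W t) (at t)) \<and> S t0 = 0"
proof -
  have "\<forall>x\<in>I. isCont (\<lambda>t. 1 / W t) x"
    using W_cont W_pos by (auto intro!: continuous_intros simp: less_imp_neq[symmetric])
  then obtain F where F: "\<forall>x\<in>I. (F has_real_derivative 1 / W x) (at x)"
    using antideriv[OF oI ivI neI] by blast
  show ?thesis
    by (rule exI[of _ "\<lambda>t. F t - F t0"]) (use F in \<open>auto intro!: derivative_eq_intros\<close>)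
qed

definition "S = (SOME S. (\<forall>t\<in>I. (S has_real_derivative 1 / W t) (at t)) \<and> S t0 = 0)"
lemma S_prop: "(\<forall>t\<in>I. (S has_real_derivative 1 / W t) (at t)) \<and> S t0 = 0"
  unfolding S_def by (rule someI_ex[OF S_ex])

lemma lin: assumes r: "r \<in> J" and t: "t \<in> I" shows "a1 t + a2 t * Q r = Aa r * S t + Bb r"
proof -
  have d0: "((\<lambda>x. a1 x + a2 x * Q r - Aa r * S x) has_real_derivative 0) (at x)" if x: "x \<in> I" for x
  proof -
    have d: "((\<lambda>x. a1 x + a2 x * Q r - Aa r * S x) has_real_derivative (a1' x + a2' x * Q r) - Aa r * (1 / W x)) (at x)"
      using x S_prop by (auto intro!: derivative_eq_intros chs)
    have "(a1' x + a2' x * Q r) - Aa r * (1 / W x) = 0"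
      using K_const[OF r x] W_pos[OF x] by (simp add: field_simps)
    then show ?thesis using d by simp
  qed
  have "\<exists>c. \<forall>x\<in>I. a1 x + a2 x * Q r - Aa r * S x = c"
    by (rule has_field_derivative_zero_constant)
       (use ivI d0 in \<open>auto simp: is_interval_convex_1 intro: has_field_derivative_at_within\<close>)
  then obtain c where c: "\<forall>x\<in>I. a1 x + a2 x * Q r - Aa r * S x = c" by blast
  have "c = Bb r" using c t0I S_prop unfolding Bb_def by force
  then show ?thesis using c t by force
qed

lemma Bb_nz: "r \<in> J \<Longrightarrow> Bb r \<noteq> 0" using nz t0I unfolding Bb_def by blast

lemma Bb_der: "r \<in> J \<Longrightarrow> (Bb has_real_derivative a2 t0 * Q' r) (at r)"
  unfolding Bb_def[abs_def] by (auto intro!: derivative_eq_intros chs)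
lemma Aa_der: "r \<in> J \<Longrightarrow> (Aa has_real_derivative a2' t0 * Q' r * W t0) (at r)"
  unfolding Aa_def[abs_def] by (auto intro!: derivative_eq_intros chs)
lemma Bb_cont: "r \<in> J \<Longrightarrow> isCont Bb r"
  using Bb_der DERIV_isCont by blast

definition "sg = sgn (Bb r0)"
lemma sgBb_pos: "r \<in> J \<Longrightarrow> sg * Bb r > 0"
  using const_sign[OF ivJ _ _ r0J, of Bb] Bb_cont Bb_nz unfolding sg_def by blast
lemma sg_sq: "sg * sg = 1" using Bb_nz[OF r0J] unfolding sg_def by (auto simp: sgn_if)

lemma H_ex: "\<exists>H. \<forall>r\<in>J. (H has_real_derivative sg * Bb r) (at r)"
  by (rule antideriv[OF oJ ivJ neJ]) (use Bb_cont in \<open>auto intro!: continuous_intros\<close>)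

definition "H = (SOME H. \<forall>r\<in>J. (H has_real_derivative sg * Bb r) (at r))"
lemma H_prop: "\<forall>r\<in>J. (H has_real_derivative sg * Bb r) (at r)"
  unfolding H_def by (rule someI_ex[OF H_ex])

definition "I' = S ` I"
definition "J' = H ` J"
definition "f = the_inv_into I S"
definition "h = the_inv_into J H"

lemma fI: "open I' \<and> bij_betw f I' I \<and> (\<forall>y\<in>I'. S (f y) = y \<and> f y \<in> I)
     \<and> (\<forall>y\<in>I'. (f has_real_derivative inverse (1 / W (f y))) (at y))"
  using inv_fun[OF oI ivI, of S "\<lambda>t. 1 / W t"] S_prop W_pos unfolding I'_def f_def by auto

lemma hJ: "open J' \<and> bij_betw h J' J \<and> (\<forall>y\<in>J'. H (h y) = y \<and> h y \<in> J)
     \<and> (\<forall>y\<in>J'. (h has_real_derivative inverse (sg * Bb (h y))) (at y))"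
  using inv_fun[OF oJ ivJ, of H "\<lambda>r. sg * Bb r"] H_prop sgBb_pos unfolding J'_def h_def by auto

lemma f_der: "y \<in> I' \<Longrightarrow> (f has_real_derivative W (f y)) (at y)" using fI by simp
lemma h_der: "y \<in> J' \<Longrightarrow> (h has_real_derivative inverse (sg * Bb (h y))) (at y)" using hJ by simp

end

context partB begin

lemma f_ch: "(g has_real_derivative g') (at x within T) \<Longrightarrow> g x \<in> I' \<Longrightarrow>
   ((\<lambda>x. f (g x)) has_real_derivative W (f (g x)) * g') (at x within T)"
  using f_der DERIV_chain2 by blast
lemma h_ch: "(g has_real_derivative g') (at x within T) \<Longrightarrow> g x \<in> J' \<Longrightarrow>
   ((\<lambda>x. h (g x)) has_real_derivative inverse (sg * Bb (h (g x))) * g') (at x within T)"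
  using h_der DERIV_chain2 by blast
lemma W_ch: "(g has_real_derivative g') (at x within T) \<Longrightarrow> g x \<in> I \<Longrightarrow>
   ((\<lambda>x. W (g x)) has_real_derivative W' (g x) * g') (at x within T)"
  using W_deriv DERIV_chain2 by blast
lemma Aa_ch: "(g has_real_derivative g') (at x within T) \<Longrightarrow> g x \<in> J \<Longrightarrow>
   ((\<lambda>x. Aa (g x)) has_real_derivative (a2' t0 * Q' (g x) * W t0) * g') (at x within T)"
  using Aa_der DERIV_chain2 by blast
lemma Bb_ch: "(g has_real_derivative g') (at x within T) \<Longrightarrow> g x \<in> J \<Longrightarrow>
   ((\<lambda>x. Bb (g x)) has_real_derivative (a2 t0 * Q' (g x)) * g') (at x within T)"
  using Bb_der DERIV_chain2 by blast

definition "QN \<rho> = Aa (h \<rho>) / Bb (h \<rho>)"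
definition "QN' \<rho> = (a2' t0 * Q' (h \<rho>) * W t0 * Bb (h \<rho>) - Aa (h \<rho>) * (a2 t0 * Q' (h \<rho>))) * inverse (sg * Bb (h \<rho>)) / (Bb (h \<rho>))^2"
definition "phN s = phi (f s)"
definition "phN' s = phi' (f s) * W (f s)"

lemma hJ': "\<rho> \<in> J' \<Longrightarrow> h \<rho> \<in> J" using hJ by blast
lemma fI': "s \<in> I' \<Longrightarrow> f s \<in> I" using fI by blast

lemma QN_der: assumes "\<rho> \<in> J'" shows "(QN has_real_derivative QN' \<rho>) (at \<rho>)"
proof -
  have b: "Bb (h \<rho>) \<noteq> 0" using Bb_nz hJ'[OF assms] by blast
  have sg: "sg \<noteq> 0" using sg_sq by auto
  show ?thesis unfolding QN_def[abs_def] QN'_def using assms hJ'[OF assms] b sg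
    by (auto intro!: derivative_eq_intros Aa_ch Bb_ch h_ch h_der simp: field_simps power2_eq_square)
qed

lemma QN'_diff: assumes "\<rho> \<in> J'" shows "QN' differentiable (at \<rho>)"
proof -
  have b: "Bb (h \<rho>) \<noteq> 0" "sg * Bb (h \<rho>) \<noteq> 0" using Bb_nz sgBb_pos hJ'[OF assms] by (blast, force)
  have "\<exists>D. (QN' has_real_derivative D) (at \<rho>)" unfolding QN'_def[abs_def]
    apply (rule exI)
    using assms hJ'[OF assms] b
    apply (auto intro!: derivative_eq_intros Aa_ch Bb_ch h_ch h_der chs)
    done
  then show ?thesis by (simp add: real_differentiable_def)
qed

lemma phN_der: assumes "s \<in> I'" shows "(phN has_real_derivative phN' s) (at s)"
  unfolding phN_def[abs_def] phN'_def using assms fI'[OF assms]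
  by (auto intro!: derivative_eq_intros f_ch f_der chs)

lemma phN'_diff: assumes "s \<in> I'" shows "phN' differentiable (at s)"
proof -
  have "\<exists>D. (phN' has_real_derivative D) (at s)" unfolding phN'_def[abs_def]
    apply (rule exI)
    using assms fI'[OF assms]
    apply (auto intro!: derivative_eq_intros f_ch f_der W_ch chs)
    done
  then show ?thesis by (simp add: real_differentiable_def)
qed

end

context partB begin

lemma metric_match: assumes s: "s \<in> I'" and \<rho>: "\<rho> \<in> J'"
  shows "(\<lambda>i j. if i \<noteq> j then 0
                   else if i = 0 then - ((deriv f s)^2 / v (f s))
                   else if i = 1 then phi (f s) * (a1 (f s) + a2 (f s) * Q (h \<rho>))^2 * (deriv h \<rho>)^2
                   else phi (f s) * 1^2)
            = (\<lambda>i j. metricA phN QN i j (mkpt s \<rho> 0 0) :: real)"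
proof -
  define t where "t = f s"
  define r where "r = h \<rho>"
  have t: "t \<in> I" and St: "S t = s" using fI s t_def by auto
  have r: "r \<in> J" using hJ \<rho> r_def by auto
  have df: "deriv f s = W t" using f_der[OF s] DERIV_imp_deriv t_def by blast
  have dh: "deriv h \<rho> = inverse (sg * Bb r)" using h_der[OF \<rho>] DERIV_imp_deriv r_def by blast
  have p: "phi t > 0" "v t > 0" using dI t by auto
  have e0: "(deriv f s)^2 / v (f s) = phi t ^ 3"
    unfolding df t_def[symmetric] W_def using p by (simp add: power2_eq_square power3_eq_cube field_simps real_sqrt_mult_self)
  have b: "Bb r \<noteq> 0" using Bb_nz r by blast
  have e1: "(a1 t + a2 t * Q r)^2 * (deriv h \<rho>)^2 = (s * QN \<rho> + 1)^2"
    unfolding lin[OF r t] dh St QN_def r_def[symmetric] using b sg_sq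
    by (simp add: power2_eq_square field_simps)
  have tc: "tco (mkpt s \<rho> 0 0) = s" "rco (mkpt s \<rho> 0 0) = \<rho>"
    unfolding tco_def rco_def mkpt_def by (simp_all add: neq4)
  have e0': "(deriv f s)^2 / v (f s) = phi (f s) ^ 3" using e0 t_def by simp
  have e1': "phi (f s) * (a1 (f s) + a2 (f s) * Q (h \<rho>))^2 * (deriv h \<rho>)^2 = phi (f s) * (s * QN \<rho> + 1)^2"
    using e1 unfolding t_def r_def by (simp add: mult.assoc)
  show ?thesis
    by (intro ext) (simp add: metricA_def tc phN_def e0' e1')
qed

theorem resultB:
  "\<exists>(I'::real set) (J'::real set) (f::real\<Rightarrow>real) (h::real\<Rightarrow>real) (c::real)
         (phiN::real\<Rightarrow>real) phiN' phiN'' (QN::real\<Rightarrow>real) QN' QN''.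
         open I' \<and> open J' \<and> bij_betw f I' I \<and> bij_betw h J' J \<and> 0 < c \<and>
         (\<forall>s\<in>I'. f differentiable (at s) \<and> deriv f s \<noteq> 0) \<and>
         (\<forall>\<rho>\<in>J'. h differentiable (at \<rho>) \<and> deriv h \<rho> \<noteq> 0) \<and>
         (\<forall>s\<in>I'. 0 < phiN s \<and> (phiN has_real_derivative phiN' s) (at s)
                       \<and> (phiN' has_real_derivative phiN'' s) (at s)) \<and>
         (\<forall>\<rho>\<in>J'. (QN has_real_derivative QN' \<rho>) (at \<rho>)
                       \<and> (QN' has_real_derivative QN'' \<rho>) (at \<rho>)) \<and>
         (\<forall>s\<in>I'. \<forall>\<rho>\<in>J'.
            (\<lambda>i j. if i \<noteq> j then 0
                   else if i = 0 then - ((deriv f s)^2 / v (f s))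
                   else if i = 1 then phi (f s) * (a1 (f s) + a2 (f s) * Q (h \<rho>))^2 * (deriv h \<rho>)^2
                   else phi (f s) * c^2)
            = (\<lambda>i j. metricA phiN QN i j (mkpt s \<rho> 0 0) :: real))"
proof (intro exI conjI)
  show "open I'" "bij_betw f I' I" using fI by auto
  show "open J'" "bij_betw h J' J" using hJ by auto
  show "(0::real) < 1" by simp
  show "\<forall>s\<in>I'. f differentiable (at s) \<and> deriv f s \<noteq> 0"
  proof
    fix s assume s: "s \<in> I'"
    have "deriv f s = W (f s)" using f_der[OF s] DERIV_imp_deriv by blast
    then show "f differentiable (at s) \<and> deriv f s \<noteq> 0"
      using f_der[OF s] W_pos[OF fI'[OF s]] by (auto simp: real_differentiable_def)
  qed
  show "\<forall>\<rho>\<in>J'. h differentiable (at \<rho>) \<and> deriv h \<rho> \<noteq> 0"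
  proof
    fix \<rho> assume \<rho>: "\<rho> \<in> J'"
    have "deriv h \<rho> = inverse (sg * Bb (h \<rho>))" using h_der[OF \<rho>] DERIV_imp_deriv by blast
    then show "h differentiable (at \<rho>) \<and> deriv h \<rho> \<noteq> 0"
      using h_der[OF \<rho>] sgBb_pos[OF hJ'[OF \<rho>]] by (auto simp: real_differentiable_def)
  qed
  show "\<forall>s\<in>I'. 0 < phN s \<and> (phN has_real_derivative phN' s) (at s) \<and> (phN' has_real_derivative deriv phN' s) (at s)"
    using phN_der phN'_diff dI fI' unfolding phN_def DERIV_deriv_iff_real_differentiable by auto
  show "\<forall>\<rho>\<in>J'. (QN has_real_derivative QN' \<rho>) (at \<rho>) \<and> (QN' has_real_derivative deriv QN' \<rho>) (at \<rho>)"
    using QN_der QN'_diff unfolding DERIV_deriv_iff_real_differentiable by auto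
  show "\<forall>s\<in>I'. \<forall>\<rho>\<in>J'.
            (\<lambda>i j. if i \<noteq> j then 0
                   else if i = 0 then - ((deriv f s)^2 / v (f s))
                   else if i = 1 then phi (f s) * (a1 (f s) + a2 (f s) * Q (h \<rho>))^2 * (deriv h \<rho>)^2
                   else phi (f s) * 1^2)
            = (\<lambda>i j. metricA phN QN i j (mkpt s \<rho> 0 0) :: real)"
    using metric_match by blast
qed

end

theorem mainTheorem7:
  shows
  "(\<forall>(I::real set) (J::real set) (phi::real\<Rightarrow>real) phi' phi'' (Q::real\<Rightarrow>real) Q' Q''.
      open I \<and> open J \<and>
      (\<forall>t\<in>I. 0 < phi t \<and> (phi has_real_derivative phi' t) (at t)
                     \<and> (phi' has_real_derivative phi'' t) (at t)) \<and>
      (\<forall>r\<in>J. (Q has_real_derivative Q' r) (at r) \<and> (Q' has_real_derivative Q'' r) (at r))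
      \<longrightarrow>
      (let U = {q. tco q \<in> I \<and> rco q \<in> J \<and> tco q * Q (rco q) + 1 \<noteq> 0} in
         plane_symmetric (metricA phi Q) U \<and>
         perfect_fluid_solution (metricA phi Q) U
           (\<lambda>i q. if i = 0 then phi (tco q) powr (-3/2) else 0)
           (\<lambda>q. let t = tco q; r = rco q in
                  (phi t powr (-3)) * (3/4 * (phi' t)^2 / (phi t)^2
                                     + phi' t * Q r / (phi t * (t * Q r + 1))))
           (\<lambda>q. let t = tco q in
                  (phi t powr (-3)) * (7/4 * (phi' t)^2 / (phi t)^2 - phi'' t / phi t))))
   \<and>
   (\<forall>(I::real set) (J::real set) (phi::real\<Rightarrow>real) phi' phi'' (v::real\<Rightarrow>real) v'
      (a1::real\<Rightarrow>real) a1' a1'' (a2::real\<Rightarrow>real) a2' a2'' (Q::real\<Rightarrow>real) Q' Q''.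
      open I \<and> is_interval I \<and> I \<noteq> {} \<and> open J \<and> is_interval J \<and> J \<noteq> {} \<and>
      (\<forall>t\<in>I. 0 < phi t \<and> 0 < v t
         \<and> (phi has_real_derivative phi' t) (at t) \<and> (phi' has_real_derivative phi'' t) (at t)
         \<and> (v has_real_derivative v' t) (at t)
         \<and> (a1 has_real_derivative a1' t) (at t) \<and> (a1' has_real_derivative a1'' t) (at t)
         \<and> (a2 has_real_derivative a2' t) (at t) \<and> (a2' has_real_derivative a2'' t) (at t)) \<and>
      (\<forall>r\<in>J. (Q has_real_derivative Q' r) (at r) \<and> (Q' has_real_derivative Q'' r) (at r)) \<and>
      (\<forall>t\<in>I. \<forall>r\<in>J.
         2 * v t * phi t * (a1'' t + a2'' t * Q r)
         + (v' t * phi t + 3 * v t * phi' t) * (a1' t + a2' t * Q r) = 0) \<and>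
      \<not> (\<exists>c. \<forall>t\<in>I. a2 t = c) \<and>
      (\<forall>t\<in>I. \<forall>r\<in>J. a1 t + a2 t * Q r \<noteq> 0)
      \<longrightarrow>
      (\<exists>(I'::real set) (J'::real set) (f::real\<Rightarrow>real) (h::real\<Rightarrow>real) (c::real)
         (phiN::real\<Rightarrow>real) phiN' phiN'' (QN::real\<Rightarrow>real) QN' QN''.
         open I' \<and> open J' \<and> bij_betw f I' I \<and> bij_betw h J' J \<and> 0 < c \<and>
         (\<forall>s\<in>I'. f differentiable (at s) \<and> deriv f s \<noteq> 0) \<and>
         (\<forall>\<rho>\<in>J'. h differentiable (at \<rho>) \<and> deriv h \<rho> \<noteq> 0) \<and>
         (\<forall>s\<in>I'. 0 < phiN s \<and> (phiN has_real_derivative phiN' s) (at s)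
                       \<and> (phiN' has_real_derivative phiN'' s) (at s)) \<and>
         (\<forall>\<rho>\<in>J'. (QN has_real_derivative QN' \<rho>) (at \<rho>)
                       \<and> (QN' has_real_derivative QN'' \<rho>) (at \<rho>)) \<and>
         (\<forall>s\<in>I'. \<forall>\<rho>\<in>J'.
            (\<lambda>i j. if i \<noteq> j then 0
                   else if i = 0 then - ((deriv f s)^2 / v (f s))
                   else if i = 1 then phi (f s) * (a1 (f s) + a2 (f s) * Q (h \<rho>))^2 * (deriv h \<rho>)^2
                   else phi (f s) * c^2)
            = (\<lambda>i j. metricA phiN QN i j (mkpt s \<rho> 0 0) :: real))))"
proof (intro conjI allI impI)
  fix I J :: "real set" and phi phi' phi'' Q Q' Q'' :: "real \<Rightarrow> real"
  assume H: "open I \<and> open J \<and>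
      (\<forall>t\<in>I. 0 < phi t \<and> (phi has_real_derivative phi' t) (at t)
                     \<and> (phi' has_real_derivative phi'' t) (at t)) \<and>
      (\<forall>r\<in>J. (Q has_real_derivative Q' r) (at r) \<and> (Q' has_real_derivative Q'' r) (at r))"
  have L: "partA I J phi phi' phi'' Q Q' Q''" unfolding partA_def using H by blast
  interpret partA I J phi phi' phi'' Q Q' Q'' by (rule L)
  show "let U = {q. tco q \<in> I \<and> rco q \<in> J \<and> tco q * Q (rco q) + 1 \<noteq> 0} in
         plane_symmetric (metricA phi Q) U \<and>
         perfect_fluid_solution (metricA phi Q) U
           (\<lambda>i q. if i = 0 then phi (tco q) powr (-3/2) else 0)
           (\<lambda>q. let t = tco q; r = rco q in
                  (phi t powr (-3)) * (3/4 * (phi' t)^2 / (phi t)^2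
                                     + phi' t * Q r / (phi t * (t * Q r + 1))))
           (\<lambda>q. let t = tco q in
                  (phi t powr (-3)) * (7/4 * (phi' t)^2 / (phi t)^2 - phi'' t / phi t))"
    using resultA unfolding U_def by (simp only: Let_def)
next
  fix I J :: "real set" and phi phi' phi'' v v' a1 a1' a1'' a2 a2' a2'' Q Q' Q'' :: "real \<Rightarrow> real"
  assume H: "open I \<and> is_interval I \<and> I \<noteq> {} \<and> open J \<and> is_interval J \<and> J \<noteq> {} \<and>
      (\<forall>t\<in>I. 0 < phi t \<and> 0 < v t
         \<and> (phi has_real_derivative phi' t) (at t) \<and> (phi' has_real_derivative phi'' t) (at t)
         \<and> (v has_real_derivative v' t) (at t)
         \<and> (a1 has_real_derivative a1' t) (at t) \<and> (a1' has_real_derivative a1'' t) (at t)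
         \<and> (a2 has_real_derivative a2' t) (at t) \<and> (a2' has_real_derivative a2'' t) (at t)) \<and>
      (\<forall>r\<in>J. (Q has_real_derivative Q' r) (at r) \<and> (Q' has_real_derivative Q'' r) (at r)) \<and>
      (\<forall>t\<in>I. \<forall>r\<in>J.
         2 * v t * phi t * (a1'' t + a2'' t * Q r)
         + (v' t * phi t + 3 * v t * phi' t) * (a1' t + a2' t * Q r) = 0) \<and>
      \<not> (\<exists>c. \<forall>t\<in>I. a2 t = c) \<and>
      (\<forall>t\<in>I. \<forall>r\<in>J. a1 t + a2 t * Q r \<noteq> 0)"
  have L: "partB I J phi phi' phi'' v v' a1 a1' a1'' a2 a2' a2'' Q Q' Q''" unfolding partB_def using H by blast
  interpret partB I J phi phi' phi'' v v' a1 a1' a1'' a2 a2' a2'' Q Q' Q'' by (rule L)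
  show "\<exists>(I'::real set) (J'::real set) (f::real\<Rightarrow>real) (h::real\<Rightarrow>real) (c::real)
         (phiN::real\<Rightarrow>real) phiN' phiN'' (QN::real\<Rightarrow>real) QN' QN''.
         open I' \<and> open J' \<and> bij_betw f I' I \<and> bij_betw h J' J \<and> 0 < c \<and>
         (\<forall>s\<in>I'. f differentiable (at s) \<and> deriv f s \<noteq> 0) \<and>
         (\<forall>\<rho>\<in>J'. h differentiable (at \<rho>) \<and> deriv h \<rho> \<noteq> 0) \<and>
         (\<forall>s\<in>I'. 0 < phiN s \<and> (phiN has_real_derivative phiN' s) (at s)
                       \<and> (phiN' has_real_derivative phiN'' s) (at s)) \<and>
         (\<forall>\<rho>\<in>J'. (QN has_real_derivative QN' \<rho>) (at \<rho>)
                       \<and> (QN' has_real_derivative QN'' \<rho>) (at \<rho>)) \<and>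
         (\<forall>s\<in>I'. \<forall>\<rho>\<in>J'.
            (\<lambda>i j. if i \<noteq> j then 0
                   else if i = 0 then - ((deriv f s)^2 / v (f s))
                   else if i = 1 then phi (f s) * (a1 (f s) + a2 (f s) * Q (h \<rho>))^2 * (deriv h \<rho>)^2
                   else phi (f s) * c^2)
            = (\<lambda>i j. metricA phiN QN i j (mkpt s \<rho> 0 0) :: real))"
    by (rule resultB)
qed

end
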